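(* Consider an additive noise model on $d$ real random variables with causal DAG $\mathcal{G}$: $x_i=f_i(\mathrm{pa}(x_i))+\epsilon_i$, with twice differentiable $f_i$ and mutually independent noises i.i.d. with smooth positive density $p^\epsilon$, so that $p(\mathbf{x})=\prod_{i=1}^d p^\epsilon(x_i-f_i(\mathrm{pa}(x_i)))$. Let $x_l$ be a leaf of $\mathcal{G}$, let $p(\mathbf{x}_{-l})=\prod_{i\neq l}p^\epsilon(x_i-f_i(\mathrm{pa}(x_i)))$, and let $\Delta_l=(\delta_j)_{j\neq l}$ with $\delta_j=\frac{\partial}{\partial x_j}\log p(\mathbf{x})-\frac{\partial}{\partial x_j}\log p(\mathbf{x}_{-l})$. Then at every point $\mathbf{x}$ where $H_{l,l}(\log p(\mathbf{x}))\neq 0$, for every $j\neq l$, $$\delta_j = H_{l,j}(\log p(\mathbf{x}))\cdot \frac{\frac{\partial}{\partial x_l}\log p(\mathbf{x})}{H_{l,l}(\log p(\mathbf{x}))},$$ i.e. $\Delta_l = H_l(\log p(\mathbf{x}))\cdot \frac{\nabla_{x_l}\log p(\mathbf{x})}{H_{l,l}(\log p(\mathbf{x}))}$ restricted to the coordinates $j\neq l$.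
   Context: $H(\log p(\mathbf{x}))$ is the Hessian of $\log p$ (the Jacobian of the score $\nabla_{\mathbf{x}}\log p(\mathbf{x})$), $H_{i,j}$ its $(i,j)$ entry and $H_l$ its $l$-th row. $\mathrm{pa}(x_i)$ denotes the parents of $x_i$ in $\mathcal{G}$; a leaf is a node with no children. *)

theory Defs
  imports "HOL-Analysis.Analysis"
begin

definition partial_deriv :: "(real^'n \<Rightarrow> real) \<Rightarrow> 'n \<Rightarrow> real^'n \<Rightarrow> real" where
  "partial_deriv F j x = deriv (\<lambda>t. F (x + t *\<^sub>R axis j 1)) 0"

definition hessian_entry :: "(real^'n \<Rightarrow> real) \<Rightarrow> 'n \<Rightarrow> 'n \<Rightarrow> real^'n \<Rightarrow> real" where
  "hessian_entry F i j x = partial_deriv (\<lambda>y. partial_deriv F i y) j x"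

definition anm_density :: "(real \<Rightarrow> real) \<Rightarrow> ('n \<Rightarrow> real^'n \<Rightarrow> real) \<Rightarrow> real^'n \<Rightarrow> real" where
  "anm_density pe f x = (\<Prod>i\<in>UNIV. pe (x$i - f i x))"

definition anm_density_minus :: "(real \<Rightarrow> real) \<Rightarrow> ('n \<Rightarrow> real^'n \<Rightarrow> real) \<Rightarrow> 'n \<Rightarrow> real^'n \<Rightarrow> real" where
  "anm_density_minus pe f l x = (\<Prod>i\<in>UNIV - {l}. pe (x$i - f i x))"

end

theory Submission
  imports Defs
begin

lemma pd_eq:
  assumes "((\<lambda>t. F (x + t *\<^sub>R axis j 1)) has_real_derivative D) (at 0)"
  shows "partial_deriv F j x = D"
  unfolding partial_deriv_def using assms by (rule DERIV_imp_deriv)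

lemma path_fderiv:
  fixes g :: "real^'n \<Rightarrow> real"
  assumes "(g has_derivative Dg) (at x)"
  shows "((\<lambda>t. g (x + t *\<^sub>R v)) has_real_derivative Dg v) (at 0)"
proof -
  have lin: "linear Dg" using assms has_derivative_linear by blast
  have p: "((\<lambda>t::real. x + t *\<^sub>R v) has_derivative (\<lambda>t. t *\<^sub>R v)) (at 0)"
    by (auto intro!: derivative_eq_intros)
  have g0: "(g has_derivative Dg) (at (x + 0 *\<^sub>R v))" using assms by simp
  have "((\<lambda>t. g (x + t *\<^sub>R v)) has_derivative (\<lambda>t. Dg (t *\<^sub>R v))) (at 0)"
    using diff_chain_at[OF p g0] by (simp add: o_def)
  moreover have "(\<lambda>t. Dg (t *\<^sub>R v)) = (*) (Dg v)"
    using lin by (auto simp: linear_scale fun_eq_iff)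
  ultimately show ?thesis by (simp add: has_field_derivative_def)
qed

theorem theorem1:
  fixes pa :: "'n::finite \<Rightarrow> 'n set"
    and f :: "'n \<Rightarrow> real^'n \<Rightarrow> real"
    and pe :: "real \<Rightarrow> real"
    and l :: 'n
  assumes dag: "acyclic {(j, i). j \<in> pa i}"
    and f_pa: "\<And>i x y. (\<forall>k\<in>pa i. x$k = y$k) \<Longrightarrow> f i x = f i y"
    and f_twice: "\<And>i. \<exists>Df. (\<forall>x. (f i has_derivative Df x) (at x))
                   \<and> (\<forall>x v. (\<lambda>y. Df y v) differentiable (at x))"
    and pe_pos: "\<And>t. pe t > 0"
    and pe_smooth: "\<And>n t. ((deriv ^^ n) pe has_real_derivative (deriv ^^ Suc n) pe t) (at t)"
    and pe_density: "(pe has_integral 1) UNIV"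
    and leaf: "\<And>i. l \<notin> pa i"
  shows "\<forall>x. hessian_entry (\<lambda>y. ln (anm_density pe f y)) l l x \<noteq> 0 \<longrightarrow>
           (\<forall>j. j \<noteq> l \<longrightarrow>
              partial_deriv (\<lambda>y. ln (anm_density pe f y)) j x
                - partial_deriv (\<lambda>y. ln (anm_density_minus pe f l y)) j x
              = hessian_entry (\<lambda>y. ln (anm_density pe f y)) l j x
                * (partial_deriv (\<lambda>y. ln (anm_density pe f y)) l x
                   / hessian_entry (\<lambda>y. ln (anm_density pe f y)) l l x))"
proof (intro allI impI)
  fix x :: "real^'n" and j :: 'n
  assume H0: "hessian_entry (\<lambda>y. ln (anm_density pe f y)) l l x \<noteq> 0" and jl: "j \<noteq> l"
  define D1 where "D1 = deriv pe"
  define D2 where "D2 = deriv (deriv pe)"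
  have dpe: "\<And>t. (pe has_real_derivative D1 t) (at t)"
    using pe_smooth[of 0] by (simp add: D1_def)
  have dD1: "\<And>t. (D1 has_real_derivative D2 t) (at t)"
    using pe_smooth[of 1] by (simp add: D1_def D2_def)
  define G where "G t = ln (pe t)" for t
  define G1 where "G1 t = D1 t / pe t" for t
  define G2 where "G2 t = (D2 t * pe t - D1 t * D1 t) / (pe t * pe t)" for t
  have dG: "\<And>t. (G has_real_derivative G1 t) (at t)"
    unfolding G_def G1_def
    by (rule derivative_eq_intros dpe | use pe_pos in force)+
  have dG1: "\<And>t. (G1 has_real_derivative G2 t) (at t)"
    unfolding G1_def G2_def
    by (rule DERIV_divide[OF dD1 dpe]) (use pe_pos in \<open>simp add: less_imp_neq[symmetric]\<close>)
  define lnpm where "lnpm y = ln (anm_density_minus pe f l y)" for y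
  have split: "(\<lambda>y. ln (anm_density pe f y)) = (\<lambda>y. lnpm y + G (y$l - f l y))"
  proof
    fix y :: "real^'n"
    have "anm_density pe f y = anm_density_minus pe f l y * pe (y$l - f l y)"
      unfolding anm_density_def anm_density_minus_def
      by (simp add: prod.remove[of UNIV l] mult.commute)
    moreover have "anm_density_minus pe f l y > 0"
      unfolding anm_density_minus_def by (rule prod_pos) (use pe_pos in auto)
    moreover have "pe (y$l - f l y) > 0" by (rule pe_pos)
    ultimately show "ln (anm_density pe f y) = lnpm y + G (y$l - f l y)"
      unfolding lnpm_def G_def by (simp add: ln_mult)
  qed
  have fconst: "\<And>i y t. f i (y + t *\<^sub>R axis l 1) = f i y"
    by (rule f_pa) (use leaf in \<open>auto simp: axis_def\<close>)
  have lnpmconst: "\<And>y t. lnpm (y + t *\<^sub>R axis l 1) = lnpm y"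
    unfolding lnpm_def anm_density_minus_def using fconst by (auto simp: axis_def intro!: prod.cong arg_cong[where f=ln])
  have Ll: "\<And>phi phi' y. (\<And>t. (phi has_real_derivative phi' t) (at t)) \<Longrightarrow>
     ((\<lambda>t. phi ((y + t *\<^sub>R axis l 1)$l - f l (y + t *\<^sub>R axis l 1))) has_real_derivative phi' (y$l - f l y)) (at 0)"
  proof -
    fix phi phi' y
    assume d: "\<And>t. (phi has_real_derivative phi' t) (at t)"
    have "((\<lambda>t. phi (y$l + t - f l y)) has_real_derivative phi' (y$l + 0 - f l y) * (0 + 1 - 0)) (at 0)"
      by (rule DERIV_chain2[OF d]) (auto intro!: derivative_eq_intros)
    then show "((\<lambda>t. phi ((y + t *\<^sub>R axis l 1)$l - f l (y + t *\<^sub>R axis l 1))) has_real_derivative phi' (y$l - f l y)) (at 0)"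
      by (simp add: fconst)
  qed
  obtain Df where Df: "\<And>y. (f l has_derivative Df y) (at y)" using f_twice[of l] by blast
  have Lj: "\<And>phi phi'. (\<And>t. (phi has_real_derivative phi' t) (at t)) \<Longrightarrow>
     ((\<lambda>t. phi ((x + t *\<^sub>R axis j 1)$l - f l (x + t *\<^sub>R axis j 1))) has_real_derivative phi' (x$l - f l x) * (0 - Df x (axis j 1))) (at 0)"
  proof -
    fix phi phi'
    assume d: "\<And>t. (phi has_real_derivative phi' t) (at t)"
    have pf: "((\<lambda>t. f l (x + t *\<^sub>R axis j 1)) has_real_derivative Df x (axis j 1)) (at 0)"
      by (rule path_fderiv[OF Df])
    have "((\<lambda>t. phi (x$l - f l (x + t *\<^sub>R axis j 1))) has_real_derivative phi' (x$l - f l (x + 0 *\<^sub>R axis j 1)) * (0 - Df x (axis j 1))) (at 0)"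
      by (rule DERIV_chain2[OF d]) (auto intro!: derivative_eq_intros pf)
    then show "?thesis phi phi'" using jl by (simp add: axis_def)
  qed
  have P1: "\<And>y. partial_deriv (\<lambda>y. ln (anm_density pe f y)) l y = G1 (y$l - f l y)"
  proof -
    fix y :: "real^'n"
    show "partial_deriv (\<lambda>y. ln (anm_density pe f y)) l y = G1 (y$l - f l y)"
      unfolding split
      apply (rule pd_eq)
      apply (simp only: lnpmconst)
      using DERIV_add[OF DERIV_const Ll[OF dG, of y]] by simp
  qed
  have P1f: "partial_deriv (\<lambda>y. ln (anm_density pe f y)) l = (\<lambda>y. G1 (y$l - f l y))"
    using P1 by auto
  have Hll: "hessian_entry (\<lambda>y. ln (anm_density pe f y)) l l x = G2 (x$l - f l x)"
    unfolding hessian_entry_def P1f by (rule pd_eq[OF Ll[OF dG1]])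
  have Hlj: "hessian_entry (\<lambda>y. ln (anm_density pe f y)) l j x = G2 (x$l - f l x) * (0 - Df x (axis j 1))"
    unfolding hessian_entry_def P1f by (rule pd_eq[OF Lj[OF dG1]])
  have lnpm_diff: "lnpm differentiable (at x)"
  proof -
    have "\<And>i. (\<lambda>y. ln (pe (y$i - f i y))) differentiable (at x)"
    proof -
      fix i
      obtain Dfi where "\<And>y. (f i has_derivative Dfi y) (at y)" using f_twice[of i] by blast
      then have fi: "f i differentiable (at x)" by (auto simp: differentiable_def)
      have a: "(\<lambda>y. y$i - f i y) differentiable (at x)"
        by (intro differentiable_diff fi bounded_linear_imp_differentiable bounded_linear_vec_nth)
      have b: "G differentiable (at (x$i - f i x))"
        unfolding real_differentiable_def using dG by blast
      show "(\<lambda>y. ln (pe (y$i - f i y))) differentiable (at x)"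
        using differentiable_chain_at[OF a b] by (simp add: o_def G_def)
    qed
    moreover have "lnpm = (\<lambda>y. \<Sum>i\<in>UNIV - {l}. ln (pe (y$i - f i y)))"
      unfolding lnpm_def anm_density_minus_def using pe_pos
      by (auto intro!: ln_prod simp: fun_eq_iff) (metis less_irrefl)
    ultimately show ?thesis by (simp add: differentiable_sum)
  qed
  then obtain DL where DL: "(lnpm has_derivative DL) (at x)" by (auto simp: differentiable_def)
  have PL: "partial_deriv lnpm j x = DL (axis j 1)"
    by (rule pd_eq[OF path_fderiv[OF DL]])
  have Pj: "partial_deriv (\<lambda>y. ln (anm_density pe f y)) j x = DL (axis j 1) + G1 (x$l - f l x) * (0 - Df x (axis j 1))"
    unfolding split by (rule pd_eq[OF DERIV_add[OF path_fderiv[OF DL] Lj[OF dG]]])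
  have G2ne: "G2 (x$l - f l x) \<noteq> 0" using H0 Hll by simp
  show "partial_deriv (\<lambda>y. ln (anm_density pe f y)) j x
                - partial_deriv (\<lambda>y. ln (anm_density_minus pe f l y)) j x
              = hessian_entry (\<lambda>y. ln (anm_density pe f y)) l j x
                * (partial_deriv (\<lambda>y. ln (anm_density pe f y)) l x
                   / hessian_entry (\<lambda>y. ln (anm_density pe f y)) l l x)"
    using PL Pj Hll Hlj P1[of x] G2ne
    by (simp add: lnpm_def[abs_def] field_simps)
qed

end
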